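(* In the setting described in the context (no inter-cell interference), suppose the target rate $R_{\tilde k}>0$ satisfies $$R_{\tilde k}<\log_2\left(1+\frac{\beta_{\tilde k}^2|\mu_{\tilde k}|^2}{\sum_{i=1}^K|\zeta_{\tilde i}|^2+\beta_k^2\beta_{\tilde k}^2|\mu_{\tilde k}|^2+\frac{\sigma_{\tilde k}^2}{P\ell(d_{\tilde k})}}\right).$$ Then the outage probability $p_{\tilde k}=\Pr\left(\log_2(1+\mathrm{SINR}_{\tilde k})<R_{\tilde k}\right)$ tends to $0$ as $\sigma_h^2\to0$ (equivalently, as the channel K factor $\mathcal K=\|\hat{\mathbf H}\|_F^2/(\sigma_h^2\mathrm{Tr}(\mathbf R_t)\mathrm{Tr}(\mathbf R_r))\to\infty$), with all other quantities held fixed.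
   Context: Let $K\le\min\{M,N\}$ be positive integers and $k\in\{1,\dots,K\}$. Fix an estimated channel $\hat{\mathbf H}\in\mathbb C^{N\times M}$, Hermitian positive definite correlation matrices $\mathbf R_r\in\mathbb C^{N\times N}$, $\mathbf R_t\in\mathbb C^{M\times M}$, and $\sigma_h^2>0$. The channel-estimation error is $\mathbf E=\mathbf R_r^{1/2}\mathbf E_w\mathbf R_t^{1/2}$ with $\mathrm{vec}(\mathbf E_w)\sim\mathcal{CN}(\mathbf 0,\sigma_h^2\mathbf I_{NM})$. Fix a precoder $\mathbf V=(\mathbf v_1,\dots,\mathbf v_K)\in\mathbb C^{M\times K}$ with $\|\mathbf v_i\|=1$, a nonzero receive filter $\mathbf u\in\mathbb C^N$ (of the far user $\tilde k$), power coefficients $\beta_k,\beta_{\tilde k}\ge0$ with $\beta_k^2+\beta_{\tilde k}^2=1$, transmit power $P>0$, distance $d_{\tilde k}>0$, path loss $\ell(d)=d^{-\alpha}$ with $\alpha>2$, noise variance $\sigma^2\ge0$, and $\sigma_{\tilde k}^2=\sigma^2\|\mathbf u\|^2$. The far user's SINR (with no inter-cell interference) is $$\mathrm{SINR}_{\tilde k}=\frac{P\ell(d_{\tilde k})|\mathbf u^{\mathrm H}\hat{\mathbf H}\mathbf v_k|^2\beta_{\tilde k}^2}{P\ell(d_{\tilde k})\left(|\mathbf u^{\mathrm H}\mathbf E\mathbf v_k|^2\beta_{\tilde k}^2+|\mathbf u^{\mathrm H}(\hat{\mathbf H}+\mathbf E)\mathbf v_k|^2\beta_k^2+\sum_{i\ne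 k}|\mathbf u^{\mathrm H}(\hat{\mathbf H}+\mathbf E)\mathbf v_i|^2\right)+\sigma_{\tilde k}^2}.$$ Define $\mu_{\tilde i}=\mathbf u^{\mathrm H}\hat{\mathbf H}\mathbf v_i$ ($i=1,\dots,K$), $\tilde{\boldsymbol\nu}=(\mu_{\tilde 1},\dots,\mu_{\widetilde{k-1}},\beta_k^2\mu_{\tilde k},\mu_{\widetilde{k+1}},\dots,\mu_{\tilde K})^{\mathrm T}$, $\tilde{\boldsymbol\Sigma}=\sigma_h^2(\mathbf u^{\mathrm H}\mathbf R_r\mathbf u)(\mathbf V^{\mathrm H}\mathbf R_t\mathbf V)^{\mathrm T}$ (the covariance of $(\mathbf u^{\mathrm H}\mathbf E\mathbf V)^{\mathrm T}$), with eigendecomposition $\tilde{\boldsymbol\Sigma}=\tilde{\boldsymbol\Psi}\tilde{\boldsymbol\Delta}\tilde{\boldsymbol\Psi}^{\mathrm H}$ ($\tilde{\boldsymbol\Psi}$ unitary), and let $\zeta_{\tilde i}$ be the $i$-th entry of $\tilde{\boldsymbol\Psi}^{\mathrm H}\tilde{\boldsymbol\nu}$. *)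

theory Defs
  imports "HOL-Analysis.Analysis"
begin

text \<open>Complex matrices are rendered as complex^c^r (rows indexed by 'r,
  columns by 'c); complex vectors as complex^n.\<close>

definition cadj :: "complex^'c^'r \<Rightarrow> complex^'r^'c" where
  "cadj A = (\<chi> i j. cnj (A $ j $ i))"

definition cinner :: "complex^'n \<Rightarrow> complex^'n \<Rightarrow> complex" where
  "cinner x y = (\<Sum>i\<in>UNIV. cnj (x $ i) * y $ i)"

definition cscale :: "complex \<Rightarrow> complex^'c^'r \<Rightarrow> complex^'c^'r" where
  "cscale c A = (\<chi> i j. c * A $ i $ j)"

definition hermitian :: "complex^'n^'n \<Rightarrow> bool" where
  "hermitian A \<longleftrightarrow> cadj A = A"

definition pos_def_herm :: "complex^'n^'n \<Rightarrow> bool" where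
  "pos_def_herm A \<longleftrightarrow> hermitian A \<and> (\<forall>x. x \<noteq> 0 \<longrightarrow> Re (cinner x (A *v x)) > 0)"

definition unitary_mat :: "complex^'n^'n \<Rightarrow> bool" where
  "unitary_mat U \<longleftrightarrow> cadj U ** U = mat 1 \<and> U ** cadj U = mat 1"

definition diagonal_mat :: "complex^'n^'n \<Rightarrow> bool" where
  "diagonal_mat D \<longleftrightarrow> (\<forall>i j. i \<noteq> j \<longrightarrow> D $ i $ j = 0)"

text \<open>Distribution of a random matrix whose vectorisation is CN(0, s I):
  i.i.d. circularly-symmetric complex Gaussian entries of variance s, i.e. density
  (pi s)^(-1) exp(-|w|^2/s) per entry w.r.t. Lebesgue measure.\<close>
definition cgauss_mat :: "real \<Rightarrow> (complex^'c^'r) measure" where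
  "cgauss_mat s = density lborel
     (\<lambda>W. ennreal (\<Prod>i\<in>UNIV. \<Prod>j\<in>UNIV. exp (- (cmod (W $ i $ j))\<^sup>2 / s) / (pi * s)))"

text \<open>SINR of the far user, given the channel estimation error E.\<close>
definition sinr_far ::
  "real \<Rightarrow> real \<Rightarrow> complex^'m^'n \<Rightarrow> complex^'m^'n \<Rightarrow> complex^'k^'m \<Rightarrow> complex^'n
    \<Rightarrow> real \<Rightarrow> real \<Rightarrow> 'k \<Rightarrow> real \<Rightarrow> real" where
  "sinr_far P l Hh E V u bk bkt k sig2 =
     (P * l * (cmod (cinner u (Hh *v column k V)))\<^sup>2 * bkt\<^sup>2) /
     (P * l * ((cmod (cinner u (E *v column k V)))\<^sup>2 * bkt\<^sup>2
             + (cmod (cinner u ((Hh + E) *v column k V)))\<^sup>2 * bk\<^sup>2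
             + (\<Sum>i\<in>UNIV - {k}. (cmod (cinner u ((Hh + E) *v column i V)))\<^sup>2))
      + sig2 * (norm u)\<^sup>2)"

end

theory Submission
  imports Defs "HOL-Probability.Probability"
begin


lemma norm_sq_mat: "(norm (W::complex^'c^'r))\<^sup>2 = (\<Sum>i\<in>UNIV. \<Sum>j\<in>UNIV. (cmod (W $ i $ j))\<^sup>2)"
proof -
  have "(norm W)\<^sup>2 = (\<Sum>i\<in>UNIV. (norm (W $ i))\<^sup>2)"
    unfolding norm_vec_def L2_set_def by (rule real_sqrt_pow2) (intro sum_nonneg, simp)
  also have "\<dots> = (\<Sum>i\<in>UNIV. \<Sum>j\<in>UNIV. (cmod (W $ i $ j))\<^sup>2)"
    unfolding norm_vec_def L2_set_def by (intro sum.cong refl real_sqrt_pow2 sum_nonneg) simp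
  finally show ?thesis .
qed

lemma exp_basis:
  fixes W :: "'a::euclidean_space"
  shows "exp (- (norm W)\<^sup>2 / c) = (\<Prod>b\<in>Basis. exp (- (W \<bullet> b)\<^sup>2 / c))"
proof -
  have "(norm W)\<^sup>2 = W \<bullet> W" by (rule power2_norm_eq_inner)
  also have "\<dots> = (\<Sum>b\<in>Basis. (W \<bullet> b) * (W \<bullet> b))" by (rule euclidean_inner)
  also have "\<dots> = (\<Sum>b\<in>Basis. (W \<bullet> b)\<^sup>2)" by (simp add: power2_eq_square)
  finally have e: "(norm W)\<^sup>2 = (\<Sum>b\<in>Basis. (W \<bullet> b)\<^sup>2)" .
  have "exp (- (norm W)\<^sup>2 / c) = exp (\<Sum>b\<in>Basis. - (W \<bullet> b)\<^sup>2 / c)"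
    unfolding e by (simp add: sum_divide_distrib sum_negf)
  also have "\<dots> = (\<Prod>b\<in>Basis. exp (- (W \<bullet> b)\<^sup>2 / c))" by (rule exp_sum) simp
  finally show ?thesis .
qed

lemma dens_eq:
  fixes W :: "complex^'c^'r"
  shows "(\<Prod>i\<in>UNIV. \<Prod>j\<in>UNIV. exp (- (cmod (W $ i $ j))\<^sup>2 / s) / (pi * s))
     = exp (- (norm W)\<^sup>2 / s) / (pi * s) ^ (CARD('r) * CARD('c))"
proof -
  have r: "(\<Prod>j\<in>UNIV. exp (- (cmod (W $ i $ j))\<^sup>2 / s) / (pi * s))
     = exp (\<Sum>j\<in>UNIV. - (cmod (W $ i $ j))\<^sup>2 / s) / (pi * s) ^ CARD('c)" for i
    by (simp only: prod_dividef exp_sum[OF finite] prod_constant)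
  have "(\<Prod>i\<in>UNIV. \<Prod>j\<in>UNIV. exp (- (cmod (W $ i $ j))\<^sup>2 / s) / (pi * s))
     = exp (\<Sum>i\<in>UNIV. \<Sum>j\<in>UNIV. - (cmod (W $ i $ j))\<^sup>2 / s) / ((pi * s) ^ CARD('c)) ^ CARD('r)"
    by (simp only: r prod_dividef exp_sum[OF finite] prod_constant)
  also have "(\<Sum>i\<in>UNIV. \<Sum>j\<in>UNIV. - (cmod (W $ i $ j))\<^sup>2 / s) = - (norm W)\<^sup>2 / s"
  proof -
    have "- (norm W)\<^sup>2 / s = (\<Sum>i\<in>UNIV. \<Sum>j\<in>UNIV. - (cmod (W $ i $ j))\<^sup>2) / s"
      by (simp add: norm_sq_mat sum_negf)
    also have "\<dots> = (\<Sum>i\<in>UNIV. \<Sum>j\<in>UNIV. - (cmod (W $ i $ j))\<^sup>2 / s)"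
      by (simp only: sum_divide_distrib)
    finally show ?thesis by simp
  qed
  also have "((pi * s) ^ CARD('c)) ^ CARD('r) = (pi * s) ^ (CARD('r) * CARD('c))"
    by (simp only: power_mult[symmetric] mult.commute)
  finally show ?thesis .
qed
lemma gauss_1d:
  assumes "s > 0"
  shows "(nn_integral lborel (\<lambda>x. ennreal (exp (- x\<^sup>2 / (2 *  s))))) = ennreal (sqrt (2 * pi* s))"
proof -
  have eq: "exp (- x\<^sup>2 / (2 *  s)) = sqrt (2 * pi* s) * normal_density 0 (sqrt s) x" for x
    using assms by (simp add: normal_density_def)
  have "(nn_integral lborel (\<lambda>x. ennreal (exp (- x\<^sup>2 / (2 *  s)))))
      = (nn_integral lborel (\<lambda>x. ennreal (sqrt (2 * pi* s)) * ennreal (normal_density 0 (sqrt s) x)))"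
    proof (intro nn_integral_cong)
    fix x show "ennreal (exp (- x\<^sup>2 / (2 * s))) = ennreal (sqrt (2 * pi * s)) * ennreal (normal_density 0 (sqrt s) x)"
      by (subst eq, rule ennreal_mult) (use assms in \<open>auto simp: normal_density_nonneg\<close>)
  qed
  also have "\<dots> = ennreal (sqrt (2 * pi* s)) * (nn_integral lborel (\<lambda>x. ennreal (normal_density 0 (sqrt s) x)))"
    by (rule nn_integral_cmult) simp
  also have "(nn_integral lborel (\<lambda>x. ennreal (normal_density 0 (sqrt s) x))) = 1" (is "?I = 1")
  proof -
    have sp: "sqrt s > 0" using assms by simp
    show "?I = 1" by (subst nn_integral_eq_integral) (auto simp: normal_density_nonneg integrable_normal_density[OF sp] integral_normal_density[OF sp])
  qed
  finally show ?thesis by simp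
qed

lemma gauss_nd:
  assumes "s > 0"
  shows "(nn_integral lborel (\<lambda>W. ennreal (exp (- (norm (W::'a::euclidean_space))\<^sup>2 / (2 *  s))))) = ennreal ((sqrt (2 * pi* s)) ^ DIM('a))"
proof -
  have "(nn_integral lborel (\<lambda>W. ennreal (exp (- (norm (W::'a))\<^sup>2 / (2 *  s)))))
     = (nn_integral lborel (\<lambda>W::'a. (\<Prod>b\<in>Basis. (\<lambda>x. ennreal (exp (- x\<^sup>2 / (2 *  s)))) (W \<bullet> b))))"
  proof (intro nn_integral_cong)
    fix W :: 'a
    have "ennreal (exp (- (norm W)\<^sup>2 / (2 * s))) = ennreal (\<Prod>b\<in>Basis. exp (- (W \<bullet> b)\<^sup>2 / (2 * s)))"
      by (subst exp_basis[where c="2 * s"]) (rule refl)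
    also have "\<dots> = (\<Prod>b\<in>Basis. ennreal (exp (- (W \<bullet> b)\<^sup>2 / (2 * s))))"
      by (rule prod_ennreal[symmetric]) auto
    finally show "ennreal (exp (- (norm W)\<^sup>2 / (2 * s))) = (\<Prod>b\<in>Basis. (\<lambda>x. ennreal (exp (- x\<^sup>2 / (2 * s)))) (W \<bullet> b))" by simp
  qed
  also have "\<dots> = (\<Prod>b\<in>(Basis::'a set). (nn_integral lborel (\<lambda>x. ennreal (exp (- x\<^sup>2 / (2 *  s))))))"
    by (rule nn_integral_lborel_prod) auto
  also have "\<dots> = ennreal ((sqrt (2 * pi* s)) ^ DIM('a))"
    by (simp only: gauss_1d[OF assms] prod_constant) (rule ennreal_power, use assms in simp)
  finally show ?thesis .
qed

lemma aux_ineq: "(0::real) < s \<Longrightarrow> d \<le> x \<Longrightarrow> -x/s \<le> -d/(2 * s) + -x/(2 * s)"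
  by (simp add: field_simps)

lemma aux_pow: "(0::real) < s \<Longrightarrow> e / (pi * s) ^ n * (sqrt (2 * pi * s)) ^ (2 * n) = 2 ^ n * e"
proof -
  assume s: "0 < s"
  have "(sqrt (2 * pi * s)) ^ (2 * n) = (2 * pi * s) ^ n"
    using s by (simp add: power_mult[of _ 2 n, simplified mult.commute] real_sqrt_pow2 power_mult)
  also have "\<dots> = 2 ^ n * (pi * s) ^ n" by (simp add: power_mult_distrib mult.assoc)
  finally show ?thesis using s by simp
qed

lemma tail_bound:
  fixes \<delta> s :: real
  assumes "\<delta> > 0" "s > 0"
  shows "emeasure (cgauss_mat s) {W::complex^'c^'r. \<delta> \<le> norm W}
     \<le> ennreal (2 ^ (CARD('r) * CARD('c)) * exp (- \<delta>\<^sup>2 / (2 * s)))"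
proof -
  define n where "n = CARD('r) * CARD('c)"
  define T where "T = {W::complex^'c^'r. \<delta> \<le> norm W}"
  define a where "a = exp (- \<delta>\<^sup>2 / (2 * s)) / (pi * s) ^ n"
  have cg: "cgauss_mat s = density lborel (\<lambda>W::complex^'c^'r. ennreal (exp (- (norm W)\<^sup>2 / s) / (pi * s) ^ n))"
    unfolding cgauss_mat_def dens_eq n_def ..
  have Tm: "T \<in> sets borel" unfolding T_def by measurable
  have "emeasure (cgauss_mat s) T = (\<integral>\<^sup>+W. ennreal (exp (- (norm W)\<^sup>2 / s) / (pi * s) ^ n) * indicator T W \<partial>lborel)"
    unfolding cg by (rule emeasure_density) (auto simp: Tm)
  also have "\<dots> \<le> (nn_integral lborel (\<lambda>W::complex^'c^'r. ennreal a * ennreal (exp (- (norm W)\<^sup>2 / (2 * s)))))"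
  proof (rule nn_integral_mono)
    fix W :: "complex^'c^'r"
    show "ennreal (exp (- (norm W)\<^sup>2 / s) / (pi * s) ^ n) * indicator T W \<le> ennreal a * ennreal (exp (- (norm W)\<^sup>2 / (2 * s)))"
    proof (cases "W \<in> T")
      case True
      then have "\<delta>\<^sup>2 \<le> (norm W)\<^sup>2" using assms unfolding T_def by (simp add: power_mono)
      then have "- (norm W)\<^sup>2 / s \<le> - \<delta>\<^sup>2 / (2 * s) + - (norm W)\<^sup>2 / (2 * s)"
        using assms by (intro aux_ineq)
      then have "exp (- (norm W)\<^sup>2 / s) \<le> exp (- \<delta>\<^sup>2 / (2 * s)) * exp (- (norm W)\<^sup>2 / (2 * s))"
        by (simp add: exp_add[symmetric])
      then have "exp (- (norm W)\<^sup>2 / s) / (pi * s) ^ n \<le> a * exp (- (norm W)\<^sup>2 / (2 * s))"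
        using assms unfolding a_def by (simp add: divide_right_mono)
      then have "ennreal (exp (- (norm W)\<^sup>2 / s) / (pi * s) ^ n) \<le> ennreal (a * exp (- (norm W)\<^sup>2 / (2 * s)))"
        by (rule ennreal_leI)
      also have "\<dots> = ennreal a * ennreal (exp (- (norm W)\<^sup>2 / (2 * s)))"
        by (rule ennreal_mult) (use assms in \<open>auto simp: a_def\<close>)
      finally show ?thesis using True by simp
    qed simp
  qed
  also have "\<dots> = ennreal a * (nn_integral lborel (\<lambda>W::complex^'c^'r. ennreal (exp (- (norm W)\<^sup>2 / (2 * s)))))"
    by (rule nn_integral_cmult) simp
  also have "\<dots> = ennreal a * ennreal ((sqrt (2 * pi * s)) ^ (2 * n))"
  proof -
    have dim: "DIM(complex^'c^'r) = 2 * n" by (simp add: n_def)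
    show ?thesis by (subst gauss_nd[OF assms(2)]) (simp only: dim)
  qed
  also have "\<dots> = ennreal (a * (sqrt (2 * pi * s)) ^ (2 * n))"
    by (rule ennreal_mult[symmetric]) (use assms in \<open>auto simp: a_def\<close>)
  also have "a * (sqrt (2 * pi * s)) ^ (2 * n) = 2 ^ n * exp (- \<delta>\<^sup>2 / (2 * s))"
    unfolding a_def by (rule aux_pow[OF assms(2)])
  finally show ?thesis unfolding T_def n_def .
qed



lemma cont_ci: "isCont (\<lambda>W::complex^'m^'n. cinner u ((Hh + Rrh ** W ** Rth) *v c)) W0"
  unfolding cinner_def matrix_vector_mult_def matrix_matrix_mult_def
  by (simp; intro continuous_intros isCont_vec_nth continuous_ident)

lemma cinner_self: "cinner z z = complex_of_real (\<Sum>i\<in>UNIV. (cmod (z$i))\<^sup>2)"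
  unfolding cinner_def of_real_sum complex_norm_square by (simp add: mult.commute)

lemma cinner_mv: "cinner (A *v x) (A *v y) = cinner x ((cadj A ** A) *v y)"
  unfolding cinner_def matrix_vector_mult_def cadj_def matrix_matrix_mult_def
  apply (simp add: sum_distrib_left sum_distrib_right mult_ac)
  apply (rule trans, rule sum.cong[OF refl], rule sum.swap)
  apply (rule trans, rule sum.swap)
  apply (rule trans, rule sum.cong[OF refl], rule sum.swap)
  apply (rule trans, rule sum.swap)
  apply (simp add: mult_ac)
  done

lemma cadj_cadj[simp]: "cadj (cadj A) = A"
  by (simp add: cadj_def vec_eq_iff)

lemma unitary_sumsq:
  assumes "unitary_mat U"
  shows "(\<Sum>i\<in>UNIV. (cmod ((cadj U *v x)$i))\<^sup>2) = (\<Sum>i\<in>UNIV. (cmod (x$i))\<^sup>2)"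
proof -
  have "complex_of_real (\<Sum>i\<in>UNIV. (cmod ((cadj U *v x)$i))\<^sup>2) = cinner (cadj U *v x) (cadj U *v x)"
    by (simp add: cinner_self)
  also have "\<dots> = cinner x x" using assms
    by (simp add: cinner_mv unitary_mat_def)
  also have "\<dots> = complex_of_real (\<Sum>i\<in>UNIV. (cmod (x$i))\<^sup>2)" by (simp add: cinner_self)
  finally show ?thesis by (simp only: of_real_eq_iff)
qed


lemma cinner_zero_right[simp]: "cinner u 0 = 0"
  by (simp add: cinner_def)

lemma cont_ci0: "isCont (\<lambda>W::complex^'m^'n. cinner u ((Rrh ** W ** Rth) *v c)) W0"
  unfolding cinner_def matrix_vector_mult_def matrix_matrix_mult_def
  by (simp; intro continuous_intros isCont_vec_nth continuous_ident)

theorem theorem5: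
  fixes Hh :: "complex^'m^'n" and Rr Rrh :: "complex^'n^'n" and Rt Rth :: "complex^'m^'m"
    and V :: "complex^'k^'m" and u :: "complex^'n" and k :: 'k
    and Psi :: "complex^'k^'k"
    and bk bkt P d alpha sigma2 R :: real
  assumes "CARD('k) \<le> CARD('m)" and "CARD('k) \<le> CARD('n)"
    and "pos_def_herm Rr" and "pos_def_herm Rt"
    and "pos_def_herm Rrh" and "Rrh ** Rrh = Rr"
    and "pos_def_herm Rth" and "Rth ** Rth = Rt"
    and "\<forall>i. norm (column i V) = 1"
    and "u \<noteq> 0"
    and "bk \<ge> 0" and "bkt \<ge> 0" and "bk\<^sup>2 + bkt\<^sup>2 = 1"
    and "P > 0" and "d > 0" and "alpha > 2" and "sigma2 \<ge> 0"
    and "unitary_mat Psi"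
    and "\<forall>s>0. diagonal_mat (cadj Psi **
            cscale (complex_of_real s * cinner u (Rr *v u)) (transpose (cadj V ** Rt ** V)) ** Psi)"
    and "R > 0"
    and "R < (let mu = (\<lambda>i. cinner u (Hh *v column i V));
                  nu = (\<chi> i. if i = k then complex_of_real (bk\<^sup>2) * mu i else mu i);
                  zeta = cadj Psi *v nu
              in log 2 (1 + bkt\<^sup>2 * (cmod (mu k))\<^sup>2 /
                   ((\<Sum>i\<in>UNIV. (cmod (zeta $ i))\<^sup>2) + bk\<^sup>2 * bkt\<^sup>2 * (cmod (mu k))\<^sup>2
                    + sigma2 * (norm u)\<^sup>2 / (P * d powr (- alpha)))))"
  shows "((\<lambda>s. measure (cgauss_mat s)
             {W. log 2 (1 + sinr_far P (d powr (- alpha)) Hh (Rrh ** W ** Rth) V u bk bkt k sigma2) < R})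
          \<longlongrightarrow> 0) (at_right 0)"
proof -
  define l where "l = d powr (- alpha)"
  define mu where "mu = (\<lambda>i. cinner u (Hh *v column i V))"
  define nu where "nu = (\<chi> i. if i = k then complex_of_real (bk\<^sup>2) * mu i else mu i)"
  define Sk where "Sk = (\<Sum>i\<in>UNIV-{k}. (cmod (mu i))\<^sup>2)"
  define m where "m = (cmod (mu k))\<^sup>2"
  define D0 where "D0 = P * l * (m * bk\<^sup>2 + Sk) + sigma2 * (norm u)\<^sup>2"
  define N where "N = P * l * m * bkt\<^sup>2"
  define Dfun where "Dfun = (\<lambda>W::complex^'m^'n. P * l * ((cmod (cinner u ((Rrh ** W ** Rth) *v column k V)))\<^sup>2 * bkt\<^sup>2
             + (cmod (cinner u ((Hh + Rrh ** W ** Rth) *v column k V)))\<^sup>2 * bk\<^sup>2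
             + (\<Sum>i\<in>UNIV - {k}. (cmod (cinner u ((Hh + Rrh ** W ** Rth) *v column i V)))\<^sup>2))
      + sigma2 * (norm u)\<^sup>2)"
  define g where "g = (\<lambda>W::complex^'m^'n. log 2 (1 + sinr_far P (d powr (- alpha)) Hh (Rrh ** W ** Rth) V u bk bkt k sigma2))"
  have lpos: "l > 0" using assms(15) by (simp add: l_def)
  have Pl: "P * l > 0" using assms(14) lpos by simp
  have gW: "g W = log 2 (1 + N / Dfun W)" for W
    by (simp add: g_def sinr_far_def Dfun_def N_def l_def m_def mu_def)
  have D00: "Dfun 0 = D0"
    by (simp add: Dfun_def D0_def m_def mu_def Sk_def)
  have zsum: "(\<Sum>i\<in>UNIV. (cmod ((cadj Psi *v nu) $ i))\<^sup>2) = Sk + bk\<^sup>2 * bk\<^sup>2 * m"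
  proof -
    have "(\<Sum>i\<in>UNIV. (cmod ((cadj Psi *v nu) $ i))\<^sup>2) = (\<Sum>i\<in>UNIV. (cmod (nu $ i))\<^sup>2)"
      by (rule unitary_sumsq[OF assms(18)])
    also have "\<dots> = (cmod (nu $ k))\<^sup>2 + (\<Sum>i\<in>UNIV-{k}. (cmod (nu $ i))\<^sup>2)"
      by (rule sum.remove) auto
    also have "(\<Sum>i\<in>UNIV-{k}. (cmod (nu $ i))\<^sup>2) = Sk"
      unfolding Sk_def by (rule sum.cong) (auto simp: nu_def)
    also have "(cmod (nu $ k))\<^sup>2 = bk\<^sup>2 * bk\<^sup>2 * m"
      by (simp add: nu_def m_def norm_mult power_mult_distrib norm_power)
    finally show ?thesis by simp
  qed
  have thr: "bkt\<^sup>2 * m / (Sk + bk\<^sup>2 * bk\<^sup>2 * m + bk\<^sup>2 * bkt\<^sup>2 * m + sigma2 * (norm u)\<^sup>2 / (P * l)) = N / D0"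
  proof -
    have "Sk + bk\<^sup>2 * bk\<^sup>2 * m + bk\<^sup>2 * bkt\<^sup>2 * m = Sk + bk\<^sup>2 * m * (bk\<^sup>2 + bkt\<^sup>2)"
      by (simp add: algebra_simps)
    also have "\<dots> = Sk + bk\<^sup>2 * m" using assms(13) by simp
    finally have e: "Sk + bk\<^sup>2 * bk\<^sup>2 * m + bk\<^sup>2 * bkt\<^sup>2 * m + sigma2 * (norm u)\<^sup>2 / (P * l) = D0 / (P * l)"
      using Pl assms(14) lpos by (simp add: D0_def field_simps)
    show ?thesis unfolding e N_def using Pl assms(14) lpos by (simp add: field_simps)
  qed
  have Rlt: "R < log 2 (1 + N / D0)"
    using assms(21) zsum thr unfolding Let_def mu_def[symmetric] nu_def[symmetric] m_def[symmetric] l_def[symmetric]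
    by simp
  have D0nn: "D0 \<ge> 0" using Pl assms(17) assms(14) lpos unfolding D0_def m_def Sk_def
    by (intro add_nonneg_nonneg mult_nonneg_nonneg sum_nonneg) auto
  have D0pos: "D0 > 0"
  proof (rule ccontr)
    assume "\<not> D0 > 0"
    then have "D0 = 0" using D0nn by simp
    then show False using Rlt assms(20) by simp
  qed
  have Nnn: "N \<ge> 0" using Pl unfolding N_def m_def by simp
  have g0: "g 0 = log 2 (1 + N / D0)" using gW D00 by simp
  have contD: "isCont Dfun 0"
    unfolding Dfun_def by (intro continuous_intros cont_ci cont_ci0)
  have contg: "isCont g 0"
  proof -
    have "isCont (\<lambda>W. log 2 (1 + N / Dfun W)) 0"
    proof -
      have q: "1 + N / D0 > 0" using D0pos Nnn by (simp add: add_pos_nonneg)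
      show ?thesis using q D0pos D00 by (intro continuous_intros contD) auto
    qed
    moreover have "g = (\<lambda>W. log 2 (1 + N / Dfun W))" by (intro ext) (rule gW)
    ultimately show ?thesis by simp
  qed
  obtain \<delta> where dpos: "\<delta> > 0" and hd: "\<And>W. dist W 0 < \<delta> \<Longrightarrow> dist (g W) (g 0) < g 0 - R"
    using contg Rlt g0 unfolding continuous_at_eps_delta by (metis diff_gt_0_iff_gt)
  have sub: "{W. log 2 (1 + sinr_far P (d powr (- alpha)) Hh (Rrh ** W ** Rth) V u bk bkt k sigma2) < R}
      \<subseteq> {W. \<delta> \<le> norm W}"
  proof
    fix W assume "W \<in> {W. log 2 (1 + sinr_far P (d powr (- alpha)) Hh (Rrh ** W ** Rth) V u bk bkt k sigma2) < R}"
    then have "g W < R" by (simp add: g_def)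
    show "W \<in> {W. \<delta> \<le> norm W}"
    proof (rule ccontr)
      assume "W \<notin> {W. \<delta> \<le> norm W}"
      then have "dist W 0 < \<delta>" by simp
      from hd[OF this] \<open>g W < R\<close> show False by (simp add: dist_real_def)
    qed
  qed
  define n where "n = CARD('n) * CARD('m)"
  have bnd: "measure (cgauss_mat s) {W. log 2 (1 + sinr_far P (d powr (- alpha)) Hh (Rrh ** W ** Rth) V u bk bkt k sigma2) < R}
        \<le> 2 ^ n * exp (- \<delta>\<^sup>2 / (2 * s))" if "s > 0" for s
  proof -
    have "emeasure (cgauss_mat s) {W. log 2 (1 + sinr_far P (d powr (- alpha)) Hh (Rrh ** W ** Rth) V u bk bkt k sigma2) < R}
        \<le> emeasure (cgauss_mat s) {W::complex^'m^'n. \<delta> \<le> norm W}"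
      by (rule emeasure_mono[OF sub]) (simp add: cgauss_mat_def)
    also have "\<dots> \<le> ennreal (2 ^ n * exp (- \<delta>\<^sup>2 / (2 * s)))"
      unfolding n_def by (rule tail_bound[OF dpos that])
    finally show ?thesis unfolding measure_def by (intro enn2real_leI) auto
  qed
  have lim: "((\<lambda>s. 2 ^ n * exp (- \<delta>\<^sup>2 / (2 * s))) \<longlongrightarrow> 0) (at_right 0)"
  proof -
    have f1: "filterlim (\<lambda>s::real. (\<delta>\<^sup>2 / 2) * inverse s) at_top (at_right 0)"
      by (rule filterlim_tendsto_pos_mult_at_top[OF tendsto_const _ filterlim_inverse_at_top_right]) (use dpos in simp)
    have f2: "filterlim (\<lambda>s::real. exp ((\<delta>\<^sup>2 / 2) * inverse s)) at_top (at_right 0)"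
      by (rule filterlim_compose[OF exp_at_top f1])
    have f3: "((\<lambda>s::real. inverse (exp ((\<delta>\<^sup>2 / 2) * inverse s))) \<longlongrightarrow> 0) (at_right 0)"
      by (rule tendsto_inverse_0_at_top[OF f2])
    have eq: "exp (- \<delta>\<^sup>2 / (2 * s)) = inverse (exp ((\<delta>\<^sup>2 / 2) * inverse s))" for s :: real
    proof -
      have "- \<delta>\<^sup>2 / (2 * s) = - ((\<delta>\<^sup>2 / 2) * inverse s)" by (simp add: field_simps)
      then show ?thesis by (simp only: exp_minus)
    qed
    show ?thesis unfolding eq by (rule tendsto_mult_right_zero[OF f3])
  qed
  show ?thesis
  proof (rule tendsto_sandwich[OF _ _ tendsto_const lim])
    show "\<forall>\<^sub>F s in at_right 0. 0 \<le> measure (cgauss_mat s) {W. log 2 (1 + sinr_far P (d powr (- alpha)) Hh (Rrh ** W ** Rth) V u bk bkt k sigma2) < R}"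
      by simp
    show "\<forall>\<^sub>F s in at_right 0. measure (cgauss_mat s) {W. log 2 (1 + sinr_far P (d powr (- alpha)) Hh (Rrh ** W ** Rth) V u bk bkt k sigma2) < R} \<le> 2 ^ n * exp (- \<delta>\<^sup>2 / (2 * s))"
      using eventually_at_right_less[of 0] by eventually_elim (rule bnd)
  qed
qed

end
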